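(* Let $T$ be a quasi-binary tree with $|V(T)|>1$ and vertex weight function $\omega:V(T)\to\mathbb{R}$. Let $\gamma,\eta\in\mathbb{R}$ be such that $\gamma\ge\omega_3$ and $$\max\left\{\frac{\omega_1-\gamma}{2},\ \omega_2-\gamma\right\}\le \eta\le \frac{\omega(T)}{2}.$$ Then there exists an edge $e\in E(T)$ such that, denoting by $C_e^1, C_e^2$ the two connected components of $T\setminus\{e\}$, we have $$\eta\le \omega(C_e^i)\le 2\eta+\gamma$$ for some $i\in\{1,2\}$.
   Context: A binary tree is a tree in which every vertex has degree $3$, except for pending vertices (degree $1$) and one root vertex (degree $2$). A tree is quasi-binary if it is a connected subgraph of a binary tree; in particular every vertex has degree $1$, $2$ or $3$. For a subgraph $H$ write $\omega(H)=\sum_{v\in V(H)}\omega(v)$. For $i=1,2,3$ let $V_i$ be the set of vertices of degree $i$, and let $\omega_i=\max\{\omega(v): v\in V_j \text{ for some } j \text{ with } i\le j\le 3\}$ (the maximum weight of a vertex of degree at least $i$). *)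

theory Defs
  imports Complex_Main
begin

definition simple_graph :: "'a set \<Rightarrow> 'a set set \<Rightarrow> bool" where
  "simple_graph V E \<longleftrightarrow> finite V \<and> (\<forall>e\<in>E. \<exists>u v. e = {u, v} \<and> u \<in> V \<and> v \<in> V \<and> u \<noteq> v)"

definition adj :: "'a set set \<Rightarrow> 'a \<Rightarrow> 'a \<Rightarrow> bool" where
  "adj E u v \<longleftrightarrow> {u, v} \<in> E \<and> u \<noteq> v"

definition reach :: "'a set \<Rightarrow> 'a set set \<Rightarrow> 'a \<Rightarrow> 'a \<Rightarrow> bool" where
  "reach V E u v \<longleftrightarrow> (u, v) \<in> {(x, y). x \<in> V \<and> y \<in> V \<and> adj E x y}\<^sup>* \<and> u \<in> V \<and> v \<in> V"

definition connected_graph :: "'a set \<Rightarrow> 'a set set \<Rightarrow> bool" where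
  "connected_graph V E \<longleftrightarrow> V \<noteq> {} \<and> (\<forall>u\<in>V. \<forall>v\<in>V. reach V E u v)"

definition is_cycle :: "'a set \<Rightarrow> 'a set set \<Rightarrow> 'a list \<Rightarrow> bool" where
  "is_cycle V E cs \<longleftrightarrow> length cs \<ge> 3 \<and> distinct cs \<and> set cs \<subseteq> V \<and>
     (\<forall>i. Suc i < length cs \<longrightarrow> adj E (cs ! i) (cs ! Suc i)) \<and> adj E (last cs) (hd cs)"

definition is_tree :: "'a set \<Rightarrow> 'a set set \<Rightarrow> bool" where
  "is_tree V E \<longleftrightarrow> simple_graph V E \<and> connected_graph V E \<and> (\<nexists>cs. is_cycle V E cs)"

definition degree :: "'a set set \<Rightarrow> 'a \<Rightarrow> nat" where
  "degree E v = card {e \<in> E. v \<in> e}"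

definition binary_tree :: "'a set \<Rightarrow> 'a set set \<Rightarrow> bool" where
  "binary_tree V E \<longleftrightarrow> is_tree V E \<and>
     (\<exists>r\<in>V. degree E r = 2 \<and> (\<forall>v\<in>V - {r}. degree E v = 1 \<or> degree E v = 3))"

text \<open>Quasi-binary tree: a tree which is (isomorphic to) a connected subgraph of a binary tree.
  The ambient binary tree is taken on vertex type nat; the subgraph relation is expressed
  by an injective vertex map sending edges to edges.\<close>
definition quasi_binary_tree :: "'a set \<Rightarrow> 'a set set \<Rightarrow> bool" where
  "quasi_binary_tree V E \<longleftrightarrow> is_tree V E \<and>
     (\<exists>(VB :: nat set) EB f. binary_tree VB EB \<and> inj_on f V \<and> f ` V \<subseteq> VB \<and>
        (\<forall>u v. {u, v} \<in> E \<longrightarrow> {f u, f v} \<in> EB))"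

definition components :: "'a set \<Rightarrow> 'a set set \<Rightarrow> 'a set set" where
  "components V E = {{y \<in> V. reach V E x y} | x. x \<in> V}"

definition weight :: "('a \<Rightarrow> real) \<Rightarrow> 'a set \<Rightarrow> real" where
  "weight \<omega> H = (\<Sum>v\<in>H. \<omega> v)"

end

theory Submission
  imports Defs "HOL-Library.Transitive_Closure_Table"
begin

lemma adj_sym: "adj E x y \<Longrightarrow> adj E y x"
  by (auto simp: adj_def insert_commute)

lemma reach_induct[consumes 1, case_names refl step]:
  assumes "reach V E x y" "P x"
    "\<And>y z. reach V E x y \<Longrightarrow> P y \<Longrightarrow> adj E y z \<Longrightarrow> z \<in> V \<Longrightarrow> P z"
  shows "P y"
proof -
  from assms(1) have r: "(x,y) \<in> {(x,y). x\<in>V \<and> y\<in>V \<and> adj E x y}\<^sup>*" and xV: "x\<in>V"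
    by (auto simp: reach_def)
  from r show ?thesis
  proof (induction rule: rtrancl_induct)
    case base then show ?case using assms(2) .
  next
    case (step y z)
    have "reach V E x y" using step.hyps xV by (auto simp: reach_def)
    then show ?case using assms(3) step by auto
  qed
qed

lemma reach_V: "reach V E x y \<Longrightarrow> x \<in> V \<and> y \<in> V" by (simp add: reach_def)

lemma reach_refl: "x \<in> V \<Longrightarrow> reach V E x x" by (simp add: reach_def)

lemma reach_step: "reach V E x y \<Longrightarrow> adj E y z \<Longrightarrow> z \<in> V \<Longrightarrow> reach V E x z"
  unfolding reach_def by (auto intro: rtrancl_into_rtrancl)

lemma reach_edge: "adj E x y \<Longrightarrow> x \<in> V \<Longrightarrow> y \<in> V \<Longrightarrow> reach V E x y"
  by (metis reach_refl reach_step)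

lemma reach_trans: "reach V E x y \<Longrightarrow> reach V E y z \<Longrightarrow> reach V E x z"
  unfolding reach_def by (auto intro: rtrancl_trans)

lemma reach_sym: assumes a: "reach V E x y" shows "reach V E y x"
  using a
proof (induction rule: reach_induct)
  case refl then show ?case using reach_V[OF a] reach_refl by metis
next
  case (step y z)
  then show ?case by (meson adj_sym reach_V reach_edge reach_trans)
qed

lemma reach_mono: assumes s: "E1 \<subseteq> E2" and a: "reach V E1 x y" shows "reach V E2 x y"
  using a
proof (induction rule: reach_induct)
  case refl then show ?case using reach_V[OF a] reach_refl by metis
next
  case (step y z)
  have "adj E2 y z" using \<open>adj E1 y z\<close> s by (auto simp: adj_def)
  then show ?case using step reach_step by metis
qed

definition comp :: "'a set \<Rightarrow> 'a set set \<Rightarrow> 'a \<Rightarrow> 'a set" where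
  "comp V E x = {y\<in>V. reach V E x y}"

definition Gv :: "'a set set \<Rightarrow> 'a \<Rightarrow> 'a set set" where
  "Gv E v = {e\<in>E. v \<notin> e}"

definition Nb :: "'a set set \<Rightarrow> 'a \<Rightarrow> 'a set" where
  "Nb E v = {w. {v,w} \<in> E}"

locale tree_ctx =
  fixes V :: "'a set" and E :: "'a set set"
  assumes sg: "simple_graph V E" and conn: "connected_graph V E"
    and acyc: "\<nexists>cs. is_cycle V E cs"
begin

lemma edge_props: "{a,b} \<in> E \<Longrightarrow> a \<noteq> b \<and> a \<in> V \<and> b \<in> V"
  using sg unfolding simple_graph_def by (metis doubleton_eq_iff)

lemma NC: assumes ab: "{a,b} \<in> E" shows "\<not> reach V (E - {{a,b}}) b a"
proof
  assume r: "reach V (E - {{a,b}}) b a"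
  define R where "R = {(x,y). x\<in>V \<and> y\<in>V \<and> adj (E - {{a,b}}) x y}"
  have "(b,a) \<in> R\<^sup>*" using r by (simp add: reach_def R_def)
  then have "(\<lambda>x y. (x,y) \<in> R)\<^sup>*\<^sup>* b a" by (simp add: rtranclp_rtrancl_eq)
  then obtain xs where "rtrancl_path (\<lambda>x y. (x,y) \<in> R) b xs a"
    using rtranclp_eq_rtrancl_path by metis
  then obtain ys where p: "rtrancl_path (\<lambda>x y. (x,y) \<in> R) b ys a" and d: "distinct (b # ys)"
    using rtrancl_path_distinct by metis
  have abV: "a \<noteq> b" "a \<in> V" "b \<in> V" using edge_props[OF ab] by auto
  have ne: "ys \<noteq> []" using p abV by (auto elim: rtrancl_path.cases)
  have ne2: "ys \<noteq> [a]"
  proof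
    assume "ys = [a]"
    then have "(b,a) \<in> R" using p by (auto elim!: rtrancl_path.cases)
    then show False by (auto simp: R_def adj_def insert_commute)
  qed
  have len: "length ys \<ge> 2"
  proof -
    have "last ys = a" using rtrancl_path_last[OF p ne] .
    then show ?thesis using ne ne2
      by (cases ys; cases "tl ys"; auto)
  qed
  have rel: "\<And>i. i < length ys \<Longrightarrow> (((b # ys) ! i), ys ! i) \<in> R"
    using rtrancl_path_nth[OF p] by blast
  have "is_cycle V E (b # ys)"
    unfolding is_cycle_def
  proof (intro conjI allI impI)
    show "3 \<le> length (b # ys)" using len by simp
    show "distinct (b # ys)" by (rule d)
    show "set (b # ys) \<subseteq> V"
    proof
      fix x assume "x \<in> set (b # ys)"
      then consider "x = b" | i where "i < length ys" "x = ys ! i" by (auto simp: in_set_conv_nth)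
      then show "x \<in> V" using abV rel by cases (auto simp: R_def)
    qed
    fix i assume "Suc i < length (b # ys)"
    then have "i < length ys" by simp
    then show "adj E ((b # ys) ! i) ((b # ys) ! Suc i)"
      using rel[of i] by (auto simp: R_def adj_def)
  next
    have "last (b # ys) = a" using rtrancl_path_last[OF p ne] ne by simp
    then show "adj E (last (b # ys)) (hd (b # ys))" using ab abV by (simp add: adj_def)
  qed
  then show False using acyc by blast
qed

lemma Gv_avoid: assumes a: "reach V (Gv E v) w y" and wv: "w \<noteq> v" shows "y \<noteq> v"
  using a
proof (induction rule: reach_induct)
  case refl then show ?case using wv .
next
  case (step y z) then show ?case by (auto simp: adj_def Gv_def)
qed

lemma F2: "w \<noteq> v \<Longrightarrow> v \<notin> comp V (Gv E v) w"
  using Gv_avoid by (auto simp: comp_def)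

lemma F3: assumes e: "{v,w} \<in> E" shows "comp V (E-{{v,w}}) w = comp V (Gv E v) w"
proof
  have vw: "v \<noteq> w" "v \<in> V" "w \<in> V" using edge_props[OF e] by auto
  show "comp V (Gv E v) w \<subseteq> comp V (E-{{v,w}}) w"
    using reach_mono[of "Gv E v" "E-{{v,w}}"] by (auto simp: comp_def Gv_def)
  show "comp V (E-{{v,w}}) w \<subseteq> comp V (Gv E v) w"
  proof
    fix y assume "y \<in> comp V (E-{{v,w}}) w"
    then have r: "reach V (E-{{v,w}}) w y" by (simp add: comp_def)
    have "reach V (Gv E v) w y"
      using r
    proof (induction rule: reach_induct)
      case refl then show ?case using vw reach_refl by metis
    next
      case (step y z)
      have yv: "y \<noteq> v" using Gv_avoid[OF \<open>reach V (Gv E v) w y\<close>] vw by auto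
      have zv: "z \<noteq> v"
      proof
        assume "z = v"
        then have "reach V (E-{{v,w}}) w v" using step reach_step by metis
        then show False using NC[OF e] by simp
      qed
      have "adj (Gv E v) y z" using \<open>adj (E-{{v,w}}) y z\<close> yv zv by (auto simp: adj_def Gv_def)
      then show ?case using step reach_step by metis
    qed
    then show "y \<in> comp V (Gv E v) w" using reach_V[OF r] by (simp add: comp_def)
  qed
qed

lemma F4: assumes e: "{u,v} \<in> E"
  shows "comp V (E-{{u,v}}) v = insert v (\<Union>w\<in>Nb E v - {u}. comp V (Gv E v) w)"
proof
  have uv: "u \<noteq> v" "u \<in> V" "v \<in> V" using edge_props[OF e] by auto
  show "comp V (E-{{u,v}}) v \<subseteq> insert v (\<Union>w\<in>Nb E v - {u}. comp V (Gv E v) w)"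
  proof
    fix y assume "y \<in> comp V (E-{{u,v}}) v"
    then have r: "reach V (E-{{u,v}}) v y" by (simp add: comp_def)
    then show "y \<in> insert v (\<Union>w\<in>Nb E v - {u}. comp V (Gv E v) w)"
    proof (induction rule: reach_induct)
      case refl then show ?case by simp
    next
      case (step y z)
      show ?case
      proof (cases "z = v")
        case True then show ?thesis by simp
      next
        case zv: False
        show ?thesis
        proof (cases "y = v")
          case True
          have "{v,z} \<in> E" "z \<noteq> u" using \<open>adj (E-{{u,v}}) y z\<close> True by (auto simp: adj_def insert_commute)
          then have "z \<in> Nb E v - {u}" by (simp add: Nb_def)
          moreover have "z \<in> comp V (Gv E v) z" using \<open>z \<in> V\<close> reach_refl by (simp add: comp_def)
          ultimately show ?thesis by blast
        next
          case yv: False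
          then obtain w where w: "w \<in> Nb E v - {u}" "y \<in> comp V (Gv E v) w" using \<open>y \<in> insert v (\<Union>w\<in>Nb E v - {u}. comp V (Gv E v) w)\<close> by auto
          have "adj (Gv E v) y z" using \<open>adj (E-{{u,v}}) y z\<close> yv zv by (auto simp: adj_def Gv_def)
          then have "z \<in> comp V (Gv E v) w" using w(2) \<open>z \<in> V\<close> reach_step by (auto simp: comp_def)
          then show ?thesis using w(1) by blast
        qed
      qed
    qed
  qed
  show "insert v (\<Union>w\<in>Nb E v - {u}. comp V (Gv E v) w) \<subseteq> comp V (E-{{u,v}}) v"
  proof
    fix x assume "x \<in> insert v (\<Union>w\<in>Nb E v - {u}. comp V (Gv E v) w)"
    then consider "x = v" | w where "w \<in> Nb E v - {u}" "x \<in> comp V (Gv E v) w" by blast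
    then show "x \<in> comp V (E-{{u,v}}) v"
    proof cases
      case 1 then show ?thesis using uv reach_refl by (simp add: comp_def)
    next
      case 2
      have ew: "{v,w} \<in> E" "w \<noteq> u" using 2 by (auto simp: Nb_def)
      have wV: "v \<noteq> w" "w \<in> V" using edge_props[OF ew(1)] by auto
      have "{v,w} \<noteq> {u,v}" using ew uv by (auto simp: doubleton_eq_iff)
      then have "adj (E-{{u,v}}) v w" using ew wV by (auto simp: adj_def)
      then have r1: "reach V (E-{{u,v}}) v w" using reach_edge uv wV by metis
      have "Gv E v \<subseteq> E-{{u,v}}" by (auto simp: Gv_def)
      then have "reach V (E-{{u,v}}) w x" using 2 reach_mono by (auto simp: comp_def)
      then show ?thesis using r1 reach_trans reach_V by (fastforce simp: comp_def)
    qed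
  qed
qed

lemma F5: assumes w1: "w1 \<in> Nb E v" and w2: "w2 \<in> Nb E v" and ne: "w1 \<noteq> w2"
  shows "comp V (Gv E v) w1 \<inter> comp V (Gv E v) w2 = {}"
proof (rule ccontr)
  assume "comp V (Gv E v) w1 \<inter> comp V (Gv E v) w2 \<noteq> {}"
  then obtain x where "reach V (Gv E v) w1 x" "reach V (Gv E v) w2 x" by (auto simp: comp_def)
  then have r: "reach V (Gv E v) w1 w2" using reach_sym reach_trans by metis
  have e1: "{v,w1} \<in> E" and e2: "{v,w2} \<in> E" using w1 w2 by (auto simp: Nb_def)
  have p1: "v \<noteq> w1" "w1 \<in> V" "v \<in> V" using edge_props[OF e1] by auto
  have p2: "v \<noteq> w2" "w2 \<in> V" using edge_props[OF e2] by auto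
  have "Gv E v \<subseteq> E-{{v,w1}}" by (auto simp: Gv_def)
  then have r': "reach V (E-{{v,w1}}) w1 w2" using r reach_mono by metis
  have "{v,w2} \<noteq> {v,w1}" using ne p2 by (auto simp: doubleton_eq_iff)
  then have "adj (E-{{v,w1}}) w2 v" using e2 p2 by (auto simp: adj_def insert_commute)
  then have "reach V (E-{{v,w1}}) w1 v" using r' reach_step p1 by metis
  then show False using NC[OF e1] by simp
qed

lemma split: assumes e: "{u,v} \<in> E"
  shows "comp V (E-{{u,v}}) v \<union> comp V (E-{{u,v}}) u = V"
    "comp V (E-{{u,v}}) v \<inter> comp V (E-{{u,v}}) u = {}"
proof -
  have uv: "u \<noteq> v" "u \<in> V" "v \<in> V" using edge_props[OF e] by auto
  show "comp V (E-{{u,v}}) v \<inter> comp V (E-{{u,v}}) u = {}"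
  proof (rule ccontr)
    assume "comp V (E-{{u,v}}) v \<inter> comp V (E-{{u,v}}) u \<noteq> {}"
    then obtain x where "reach V (E-{{u,v}}) v x" "reach V (E-{{u,v}}) u x" by (auto simp: comp_def)
    then have "reach V (E-{{u,v}}) v u" using reach_sym reach_trans by metis
    then show False using NC[OF e] by simp
  qed
  show "comp V (E-{{u,v}}) v \<union> comp V (E-{{u,v}}) u = V"
  proof
    show "comp V (E-{{u,v}}) v \<union> comp V (E-{{u,v}}) u \<subseteq> V" by (auto simp: comp_def)
    show "V \<subseteq> comp V (E-{{u,v}}) v \<union> comp V (E-{{u,v}}) u"
    proof
      fix x assume xV: "x \<in> V"
      have "reach V E v x" using conn uv xV by (simp add: connected_graph_def)
      then show "x \<in> comp V (E-{{u,v}}) v \<union> comp V (E-{{u,v}}) u"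
      proof (induction rule: reach_induct)
        case refl then show ?case using uv reach_refl[of v V] by (simp add: comp_def)
      next
        case (step y z)
        show ?case
        proof (cases "{y,z} = {u,v}")
          case True
          then have "z = u \<or> z = v" by (auto simp: doubleton_eq_iff)
          then show ?thesis using uv reach_refl[of u V] reach_refl[of v V] by (auto simp: comp_def)
        next
          case False
          then have a: "adj (E-{{u,v}}) y z" using \<open>adj E y z\<close> by (auto simp: adj_def)
          show ?thesis using step reach_step[OF _ a \<open>z \<in> V\<close>] by (auto simp: comp_def)
        qed
      qed
    qed
  qed
qed


lemma fin: "finite V" using sg by (simp add: simple_graph_def)

lemma card_Nb: assumes v: "v \<in> V" shows "card (Nb E v) = degree E v" "finite (Nb E v)"
proof -
  have "bij_betw (\<lambda>w. {v,w}) (Nb E v) {e\<in>E. v\<in>e}"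
    unfolding bij_betw_def
  proof
    show "inj_on (\<lambda>w. {v,w}) (Nb E v)" by (auto simp: inj_on_def doubleton_eq_iff)
    show "(\<lambda>w. {v,w}) ` Nb E v = {e\<in>E. v\<in>e}"
    proof
      show "(\<lambda>w. {v,w}) ` Nb E v \<subseteq> {e\<in>E. v\<in>e}" by (auto simp: Nb_def)
      show "{e\<in>E. v\<in>e} \<subseteq> (\<lambda>w. {v,w}) ` Nb E v"
      proof
        fix e assume e: "e \<in> {e\<in>E. v\<in>e}"
        then obtain a b where "e = {a,b}" using sg by (auto simp: simple_graph_def)
        then have "e = {v, if a = v then b else a}" using e by auto
        then show "e \<in> (\<lambda>w. {v,w}) ` Nb E v" using e by (auto simp: Nb_def)
      qed
    qed
  qed
  then show "card (Nb E v) = degree E v" by (simp add: bij_betw_same_card degree_def)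
  have "Nb E v \<subseteq> V" using edge_props by (auto simp: Nb_def)
  then show "finite (Nb E v)" using fin finite_subset by blast
qed

end

lemma degree_le3: assumes qb: "quasi_binary_tree V E" and v: "v \<in> V" shows "degree E v \<le> 3"
proof -
  obtain VB :: "nat set" and EB f where b: "binary_tree VB EB" and inj: "inj_on f V"
    and fV: "f ` V \<subseteq> VB" and ed: "\<forall>u v. {u, v} \<in> E \<longrightarrow> {f u, f v} \<in> EB"
    using qb unfolding quasi_binary_tree_def by blast
  have sgE: "simple_graph V E" using qb by (simp add: quasi_binary_tree_def is_tree_def)
  have sgB: "simple_graph VB EB" using b by (simp add: binary_tree_def is_tree_def)
  have "EB \<subseteq> Pow VB" using sgB by (auto simp: simple_graph_def)
  then have finEB: "finite EB" using sgB by (auto simp: simple_graph_def intro: finite_subset)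
  have eV: "\<And>e. e \<in> E \<Longrightarrow> e \<subseteq> V" using sgE by (auto simp: simple_graph_def)
  have "card {e\<in>E. v\<in>e} \<le> card {e\<in>EB. f v\<in>e}"
  proof (rule card_inj_on_le[where f="image f"])
    show "inj_on ((`) f) {e \<in> E. v \<in> e}"
      unfolding inj_on_def using inj_on_image_eq_iff[OF inj] eV by blast
    show "(`) f ` {e \<in> E. v \<in> e} \<subseteq> {e \<in> EB. f v \<in> e}"
    proof
      fix x assume "x \<in> (`) f ` {e \<in> E. v \<in> e}"
      then obtain e where e: "e \<in> E" "v \<in> e" "x = f ` e" by auto
      then obtain a b where "e = {a,b}" using sgE by (auto simp: simple_graph_def)
      then show "x \<in> {e \<in> EB. f v \<in> e}" using e ed by auto
    qed
    show "finite {e \<in> EB. f v \<in> e}" using finEB by simp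
  qed
  moreover have "degree EB (f v) \<le> 3"
    using b fV v unfolding binary_tree_def by force
  ultimately show ?thesis by (simp add: degree_def)
qed


theorem lemma1:
  fixes V :: "'a set" and E :: "'a set set" and \<omega> :: "'a \<Rightarrow> real" and \<gamma> \<eta> :: real
  assumes qb: "quasi_binary_tree V E"
    and big: "card V > 1"
    and gamma3: "\<forall>v\<in>V. degree E v \<ge> 3 \<longrightarrow> \<omega> v \<le> \<gamma>"
    and eta1: "\<forall>v\<in>V. degree E v \<ge> 1 \<longrightarrow> (\<omega> v - \<gamma>) / 2 \<le> \<eta>"
    and eta2: "\<forall>v\<in>V. degree E v \<ge> 2 \<longrightarrow> \<omega> v - \<gamma> \<le> \<eta>"
    and etaT: "\<eta> \<le> weight \<omega> V / 2"
  shows "\<exists>e\<in>E. \<exists>C\<in>components V (E - {e}). \<eta> \<le> weight \<omega> C \<and> weight \<omega> C \<le> 2 * \<eta> + \<gamma>"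
proof -
  interpret tree_ctx V E using qb
    by unfold_locales (auto simp: quasi_binary_tree_def is_tree_def)
  let ?G = "\<exists>e\<in>E. \<exists>C\<in>components V (E - {e}). \<eta> \<le> weight \<omega> C \<and> weight \<omega> C \<le> 2 * \<eta> + \<gamma>"
  define S where "S u v = comp V (E-{{u,v}}) v" for u v
  have main: "\<forall>u v. {u,v} \<in> E \<and> \<eta> \<le> weight \<omega> (S u v) \<and> card (S u v) = n \<longrightarrow> ?G" for n
  proof (induction n rule: less_induct)
    case (less n)
    show ?case
    proof (intro allI impI, elim conjE)
      fix u v assume e: "{u,v} \<in> E" and wt: "\<eta> \<le> weight \<omega> (S u v)" and cn: "card (S u v) = n"
      have uv: "u \<noteq> v" "u \<in> V" "v \<in> V" using edge_props[OF e] by auto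
      define W where "W = Nb E v - {u}"
      define K where "K w = comp V (Gv E v) w" for w
      have SK: "S u v = insert v (\<Union>w\<in>W. K w)" using F4[OF e] by (simp add: S_def W_def K_def)
      have finS: "finite (S u v)" using fin by (auto simp: S_def comp_def)
      have uN: "u \<in> Nb E v" using e by (simp add: Nb_def insert_commute)
      have finW: "finite W" using card_Nb[OF uv(3)] by (simp add: W_def)
      have cW: "card W = degree E v - 1" using card_Nb[OF uv(3)] uN by (simp add: W_def)
      have d3: "degree E v \<le> 3" using degree_le3[OF qb uv(3)] .
      have d1: "degree E v \<ge> 1" using card_Nb[OF uv(3)] uN
        by (metis One_nat_def Suc_leI card_gt_0_iff empty_iff)
      have wvne: "\<And>w. w \<in> W \<Longrightarrow> w \<noteq> v"
        using edge_props by (auto simp: W_def Nb_def)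
      show ?G
      proof (cases "\<exists>w\<in>W. \<eta> \<le> weight \<omega> (K w)")
        case True
        then obtain w where w: "w \<in> W" "\<eta> \<le> weight \<omega> (K w)" by blast
        have ew: "{v,w} \<in> E" using w by (simp add: W_def Nb_def)
        have KS: "K w = S v w" using F3[OF ew] by (simp add: S_def K_def)
        have "K w \<subseteq> S u v" using SK w by blast
        moreover have "v \<in> S u v" using SK by blast
        moreover have "v \<notin> K w" using F2[OF wvne[OF w(1)]] by (simp add: K_def)
        ultimately have "card (K w) < card (S u v)" using finS by (metis psubset_card_mono psubsetI)
        then show ?G using less[of "card (K w)"] cn ew w KS by auto
      next
        case False
        then have lt: "\<And>w. w \<in> W \<Longrightarrow> weight \<omega> (K w) \<le> \<eta>" by auto
        have finK: "\<And>w. finite (K w)" using fin by (auto simp: K_def comp_def)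
        have vnot: "v \<notin> (\<Union>w\<in>W. K w)" using F2 wvne by (auto simp: K_def)
        have disj: "\<forall>i\<in>W. \<forall>j\<in>W. i \<noteq> j \<longrightarrow> K i \<inter> K j = {}"
          using F5 by (auto simp: K_def W_def)
        have "weight \<omega> (S u v) = \<omega> v + weight \<omega> (\<Union>w\<in>W. K w)"
          unfolding SK weight_def using finW finK vnot by (simp add: sum.insert)
        also have "weight \<omega> (\<Union>w\<in>W. K w) = (\<Sum>w\<in>W. weight \<omega> (K w))"
          unfolding weight_def using sum.UNION_disjoint[OF finW _ disj] finK by simp
        also have "(\<Sum>w\<in>W. weight \<omega> (K w)) \<le> real (card W) * \<eta>"
          using sum_bounded_above[of W "\<lambda>w. weight \<omega> (K w)" \<eta>] lt by simp
        finally have ub: "weight \<omega> (S u v) \<le> \<omega> v + real (card W) * \<eta>" by simp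
        have "weight \<omega> (S u v) \<le> 2 * \<eta> + \<gamma>"
        proof -
          consider "degree E v = 1" | "degree E v = 2" | "degree E v = 3" using d1 d3 by linarith
          then show ?thesis
          proof cases
            case 1 then show ?thesis using ub cW eta1 uv(3) by auto
          next
            case 2 then show ?thesis using ub cW eta2 uv(3) by auto
          next
            case 3 then show ?thesis using ub cW gamma3 uv(3) by auto
          qed
        qed
        moreover have "S u v \<in> components V (E - {{u,v}})"
          using uv by (auto simp: S_def comp_def components_def)
        ultimately show ?G using e wt by blast
      qed
    qed
  qed
  obtain a where aV: "a \<in> V" using big by (metis card.empty ex_in_conv not_less0)
  have "V - {a} \<noteq> {}"
  proof
    assume "V - {a} = {}"
    then have "V = {a}" using aV by blast
    then show False using big by simp
  qed
  then obtain b where bV: "b \<in> V" "b \<noteq> a" by blast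
  have "reach V E a b" using conn aV bV by (simp add: connected_graph_def)
  then have "(a,b) \<in> {(x,y). x\<in>V \<and> y\<in>V \<and> adj E x y}\<^sup>*" by (simp add: reach_def)
  then obtain y where "(a,y) \<in> {(x,y). x\<in>V \<and> y\<in>V \<and> adj E x y}"
    using bV by (metis converse_rtranclE)
  then have ay: "{a,y} \<in> E" by (simp add: adj_def)
  have ya: "{y,a} \<in> E" using ay by (simp add: insert_commute)
  have sp1: "S a y \<union> S y a = V" "S a y \<inter> S y a = {}"
    using split[OF ay] by (simp_all add: S_def insert_commute)
  have finS: "finite (S a y)" "finite (S y a)" using fin by (auto simp: S_def comp_def)
  have "weight \<omega> V = weight \<omega> (S a y) + weight \<omega> (S y a)"
    unfolding weight_def using sum.union_disjoint[OF finS sp1(2)] sp1(1) by simp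
  then have "\<eta> \<le> weight \<omega> (S a y) \<or> \<eta> \<le> weight \<omega> (S y a)" using etaT by linarith
  then show ?thesis using main ay ya by blast
qed

end
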